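(* Let $G$ be a finite abelian group. There is a point $\nu\in\mathcal{P}(G)$ whose basin of attraction (the set of $\mu\in\mathcal{P}(G)$ whose $\omega$-limit set under $Q$ is $\{\nu\}$) is an open and dense subset of $\mathcal{P}(G)$.
   Context: $\mathcal{P}(G)$ is the simplex of probability measures on $G$ with convolution $(\nu*\mu)(\{g\})=\sum_{xy=g}\nu(\{x\})\mu(\{y\})$ and unit $1=\delta_e$. For $t\in[0,1)$, $Q_t(\mu)=(1-t)\mu*(1-t\mu)^{-1}=\sum_{k\ge0}(1-t)t^k\mu^{k+1}$. The $\omega$-limit set of $\mu$ is $\{\nu:\nu=\lim_kQ_{t_k}(\mu)\text{ for some } t_k\to1^-\}$. Such a $\nu$ is called the main attractor point. *)

theory Defs
  imports "HOL-Analysis.Analysis"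
begin

text \<open>A finite abelian group is modelled as a type of class
  {ab_group_add, finite}, written additively (unit 0).  Measures on G are
  vectors in real^'g (Euclidean topology).\<close>

definition prob_meas :: "(real ^ ('g::{ab_group_add,finite})) set" where
  "prob_meas = {\<mu>. (\<forall>g. 0 \<le> \<mu> $ g) \<and> (\<Sum>g\<in>UNIV. \<mu> $ g) = 1}"

definition conv :: "real ^ ('g::{ab_group_add,finite}) \<Rightarrow> real ^ ('g::{ab_group_add,finite}) \<Rightarrow> real ^ ('g::{ab_group_add,finite})" where
  "conv \<nu> \<mu> = (\<chi> g. \<Sum>x\<in>UNIV. \<nu> $ x * \<mu> $ (g - x))"

definition delta0 :: "real ^ ('g::{ab_group_add,finite})" where
  "delta0 = (\<chi> g. if g = 0 then 1 else 0)"

fun conv_pow :: "real ^ ('g::{ab_group_add,finite}) \<Rightarrow> nat \<Rightarrow> real ^ ('g::{ab_group_add,finite})" where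
  "conv_pow \<mu> 0 = delta0"
| "conv_pow \<mu> (Suc n) = conv \<mu> (conv_pow \<mu> n)"

definition Qmap :: "real \<Rightarrow> real ^ ('g::{ab_group_add,finite}) \<Rightarrow> real ^ ('g::{ab_group_add,finite})" where
  "Qmap t \<mu> = (\<Sum>k. ((1 - t) * t ^ k) *\<^sub>R conv_pow \<mu> (Suc k))"

definition omega_limit :: "real ^ ('g::{ab_group_add,finite}) \<Rightarrow> (real ^ ('g::{ab_group_add,finite})) set" where
  "omega_limit \<mu> = {\<nu>. \<exists>t :: nat \<Rightarrow> real. (\<forall>k. 0 \<le> t k \<and> t k < 1) \<and> t \<longlonglongrightarrow> 1
      \<and> (\<lambda>k. Qmap (t k) \<mu>) \<longlonglongrightarrow> \<nu>}"

definition basin :: "real ^ ('g::{ab_group_add,finite}) \<Rightarrow> (real ^ ('g::{ab_group_add,finite})) set" where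
  "basin \<nu> = {\<mu> \<in> prob_meas. omega_limit \<mu> = {\<nu>}}"

end

theory Submission
  imports Defs
begin

lemma sum_shift: "(\<Sum>g\<in>UNIV. f (g - x)) = (\<Sum>g\<in>(UNIV::'g::{ab_group_add,finite} set). f g)"
  by (rule sum.reindex_bij_witness[where i="\<lambda>g. g + x" and j="\<lambda>g. g - x"]) auto

lemma conv_nth: "conv \<nu> \<mu> $ g = (\<Sum>x\<in>UNIV. \<nu> $ x * \<mu> $ (g - x))"
  by (simp add: conv_def)

lemma conv_delta0: "conv \<mu> delta0 = \<mu>"
proof -
  have "\<And>g. (\<Sum>x\<in>UNIV. \<mu> $ x * delta0 $ (g - x)) = \<mu> $ g"
    by (simp add: delta0_def if_distrib sum.delta' cong: if_cong)
  then show ?thesis by (simp add: vec_eq_iff conv_nth)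
qed

lemma delta0_prob: "delta0 \<in> prob_meas"
  by (simp add: prob_meas_def delta0_def)

lemma conv_prob: assumes "\<nu> \<in> prob_meas" "\<mu> \<in> prob_meas" shows "conv \<nu> \<mu> \<in> prob_meas"
proof -
  have nn: "\<forall>g. 0 \<le> conv \<nu> \<mu> $ g" using assms
    by (auto simp: prob_meas_def conv_nth intro!: sum_nonneg)
  have "(\<Sum>g\<in>UNIV. conv \<nu> \<mu> $ g) = (\<Sum>x\<in>UNIV. \<nu> $ x * (\<Sum>g\<in>UNIV. \<mu> $ (g - x)))"
    unfolding conv_nth sum_distrib_left by (rule sum.swap)
  also have "\<dots> = 1" using assms by (simp add: sum_shift[of "\<lambda>g. \<mu> $ g"] prob_meas_def)
  finally show ?thesis using nn by (simp add: prob_meas_def)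
qed

lemma conv_pow_prob: "\<mu> \<in> prob_meas \<Longrightarrow> conv_pow \<mu> n \<in> prob_meas"
  by (induction n) (auto simp: delta0_prob conv_prob)

lemma prob_nth: "\<mu> \<in> prob_meas \<Longrightarrow> 0 \<le> \<mu> $ g \<and> \<mu> $ g \<le> 1"
proof -
  assume a: "\<mu> \<in> prob_meas"
  have "\<mu> $ g \<le> (\<Sum>h\<in>UNIV. \<mu> $ h)" using a
    by (intro member_le_sum) (auto simp: prob_meas_def)
  then show ?thesis using a by (auto simp: prob_meas_def)
qed

lemma prob_norm: "\<mu> \<in> prob_meas \<Longrightarrow> norm \<mu> \<le> 1"
  using norm_le_l1_cart[of \<mu>] by (auto simp: prob_meas_def)

lemma summ_vec:
  assumes "\<mu> \<in> prob_meas" "0 \<le> t" "t < 1"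
  shows "summable (\<lambda>k. ((1 - t) * t ^ k) *\<^sub>R conv_pow \<mu> (Suc k))"
proof (rule summable_comparison_test)
  show "\<exists>N. \<forall>n\<ge>N. norm (((1 - t) * t ^ n) *\<^sub>R conv_pow \<mu> (Suc n)) \<le> (1-t) * t^n"
  proof (intro exI allI impI)
    fix n :: nat
    have "norm (conv_pow \<mu> (Suc n)) \<le> 1" using prob_norm[OF conv_pow_prob[OF assms(1)]] by blast
    moreover have "0 \<le> (1-t) * t^n" using assms by simp
    ultimately show "norm (((1 - t) * t ^ n) *\<^sub>R conv_pow \<mu> (Suc n)) \<le> (1-t) * t^n"
      by (simp add: mult_left_le)
  qed
  show "summable (\<lambda>n. (1-t) * t^n)" using assms by (intro summable_mult summable_geometric) auto
qed

lemma summ_nth: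
  assumes "\<mu> \<in> prob_meas" "0 \<le> t" "t < 1"
  shows "summable (\<lambda>k. ((1 - t) * t ^ k) * conv_pow \<mu> (Suc k) $ g)"
proof (rule summable_comparison_test)
  show "\<exists>N. \<forall>n\<ge>N. norm (((1 - t) * t ^ n) * conv_pow \<mu> (Suc n) $ g) \<le> (1-t) * t^n"
  proof (intro exI allI impI)
    fix n :: nat
    have "\<bar>conv_pow \<mu> (Suc n) $ g\<bar> \<le> 1" using prob_nth[OF conv_pow_prob[OF assms(1)], of "Suc n" g] by linarith
    moreover have "0 \<le> (1-t) * t^n" using assms by simp
    ultimately show "norm (((1 - t) * t ^ n) * conv_pow \<mu> (Suc n) $ g) \<le> (1-t) * t^n"
      using assms by (simp add: abs_mult mult_left_le)
  qed
  show "summable (\<lambda>n. (1-t) * t^n)" using assms by (intro summable_mult summable_geometric) auto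
qed

lemma Qmap_nth:
  assumes "\<mu> \<in> prob_meas" "0 \<le> t" "t < 1"
  shows "Qmap t \<mu> $ g = (\<Sum>k. ((1 - t) * t ^ k) * conv_pow \<mu> (Suc k) $ g)"
  using bounded_linear.suminf[OF bounded_linear_vec_nth[of g] summ_vec[OF assms]]
  by (simp add: Qmap_def)

lemma Qmap_prob:
  assumes "\<mu> \<in> prob_meas" "0 \<le> t" "t < 1"
  shows "Qmap t \<mu> \<in> prob_meas"
proof -
  have nn: "0 \<le> Qmap t \<mu> $ g" for g
    unfolding Qmap_nth[OF assms]
    using assms prob_nth[OF conv_pow_prob[OF assms(1)]]
    by (intro suminf_nonneg summ_nth[OF assms] mult_nonneg_nonneg) (auto simp del: conv_pow.simps)
  have "(\<Sum>g\<in>UNIV. Qmap t \<mu> $ g) = (\<Sum>g\<in>UNIV. \<Sum>k. ((1 - t) * t ^ k) * conv_pow \<mu> (Suc k) $ g)"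
    by (simp add: Qmap_nth[OF assms])
  also have "\<dots> = (\<Sum>k. \<Sum>g\<in>UNIV. ((1 - t) * t ^ k) * conv_pow \<mu> (Suc k) $ g)"
    by (rule suminf_sum[symmetric]) (rule summ_nth[OF assms])
  also have "\<dots> = (\<Sum>k. (1 - t) * t ^ k)"
    using conv_pow_prob[OF assms(1)] by (simp add: sum_distrib_left[symmetric] prob_meas_def del: conv_pow.simps)
  also have "\<dots> = (1 - t) * (1 / (1 - t))"
    using assms by (simp add: suminf_mult summable_geometric suminf_geometric)
  also have "\<dots> = 1" using assms by simp
  finally show ?thesis using nn by (simp add: prob_meas_def)
qed

lemma Qmap_fix:
  assumes "\<mu> \<in> prob_meas" "0 \<le> t" "t < 1"
  shows "t * conv \<mu> (Qmap t \<mu>) $ g = Qmap t \<mu> $ g - (1 - t) * \<mu> $ g"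
proof -
  define c where "c k = (1 - t) * t ^ k" for k :: nat
  define a where "a k h = conv_pow \<mu> (Suc k) $ h" for k h
  have sa: "summable (\<lambda>k. c k * a k h)" for h
    unfolding a_def c_def by (rule summ_nth[OF assms])
  have Q: "Qmap t \<mu> $ h = (\<Sum>k. c k * a k h)" for h
    unfolding a_def c_def by (rule Qmap_nth[OF assms])
  have "conv \<mu> (Qmap t \<mu>) $ g = (\<Sum>x\<in>UNIV. \<mu> $ x * (\<Sum>k. c k * a k (g - x)))"
    by (simp add: conv_nth Q)
  also have "\<dots> = (\<Sum>x\<in>UNIV. \<Sum>k. \<mu> $ x * (c k * a k (g - x)))"
    using sa by (simp add: suminf_mult)
  also have "\<dots> = (\<Sum>k. \<Sum>x\<in>UNIV. \<mu> $ x * (c k * a k (g - x)))"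
    using sa by (intro suminf_sum[symmetric] summable_mult) auto
  also have "\<dots> = (\<Sum>k. c k * a (Suc k) g)"
    by (simp add: a_def conv_nth sum_distrib_left mult.left_commute)
  finally have 1: "conv \<mu> (Qmap t \<mu>) $ g = (\<Sum>k. c k * a (Suc k) g)" .
  have "t * (\<Sum>k. c k * a (Suc k) g) = (\<Sum>k. c (Suc k) * a (Suc k) g)"
  proof -
    have "summable (\<lambda>k. c (Suc k) * a (Suc k) g)" using sa[of g] summable_Suc_iff[of "\<lambda>k. c k * a k g"] by simp
    moreover have "c (Suc k) = t * c k" for k by (simp add: c_def)
    ultimately have "summable (\<lambda>k. t * (c k * a (Suc k) g))" by (simp add: mult.assoc)
    then show ?thesis
      by (cases "t = 0") (simp_all add: c_def suminf_mult[symmetric] mult.assoc mult.left_commute summable_mult_D)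
  qed
  also have "\<dots> = (\<Sum>k. c k * a k g) - c 0 * a 0 g"
    using suminf_split_head[OF sa[of g]] by simp
  also have "\<dots> = Qmap t \<mu> $ g - (1 - t) * \<mu> $ g"
    by (simp add: Q c_def a_def conv_delta0)
  finally show ?thesis using 1 by simp
qed

definition gen :: "real ^ ('g::{ab_group_add,finite}) \<Rightarrow> bool" where
  "gen \<mu> \<longleftrightarrow> (\<forall>M. M \<noteq> {} \<and> (\<forall>g\<in>M. \<forall>s. 0 < \<mu> $ s \<longrightarrow> g + s \<in> M) \<longrightarrow> M = UNIV)"

definition unif :: "real ^ ('g::{ab_group_add,finite})" where
  "unif = (\<chi> g. 1 / real CARD('g))"

lemma unif_prob: "unif \<in> prob_meas"
  by (simp add: unif_def prob_meas_def)

lemma unif_pos: "0 < unif $ g"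
  by (simp add: unif_def)

lemma maxp:
  assumes mu: "\<mu> \<in> prob_meas" and gen: "gen \<mu>" and rho: "\<rho> \<in> prob_meas" and fx: "conv \<mu> \<rho> = \<rho>"
  shows "\<rho> = unif"
proof -
  define m where "m = Max (range (\<lambda>g. \<rho> $ g))"
  define M where "M = {g. \<rho> $ g = m}"
  have le: "\<rho> $ h \<le> m" for h unfolding m_def by (rule Max_ge) auto
  have "m \<in> range (\<lambda>g. \<rho> $ g)" unfolding m_def by (rule Max_in) auto
  then have Mne: "M \<noteq> {}" by (auto simp: M_def)
  have step: "\<rho> $ (g - s) = m" if "g \<in> M" "0 < \<mu> $ s" for g s
  proof -
    have "(\<Sum>x\<in>UNIV. \<mu> $ x * (m - \<rho> $ (g - x))) = m * (\<Sum>x\<in>UNIV. \<mu> $ x) - (\<Sum>x\<in>UNIV. \<mu> $ x * \<rho> $ (g - x))"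
      by (simp add: algebra_simps sum_subtractf sum_distrib_left)
    also have "\<dots> = m - \<rho> $ g"
      using mu fx conv_nth[of \<mu> \<rho> g] by (simp add: prob_meas_def)
    also have "\<dots> = 0" using that by (simp add: M_def)
    finally have "(\<Sum>x\<in>UNIV. \<mu> $ x * (m - \<rho> $ (g - x))) = 0" .
    moreover have "\<forall>x\<in>UNIV. 0 \<le> \<mu> $ x * (m - \<rho> $ (g - x))"
      using mu le by (simp add: prob_meas_def)
    ultimately have "\<mu> $ s * (m - \<rho> $ (g - s)) = 0"
      using sum_nonneg_eq_0_iff[of UNIV "\<lambda>x. \<mu> $ x * (m - \<rho> $ (g - x))"] by simp
    then show ?thesis using that by simp
  qed
  have "uminus ` M = UNIV"
  proof (rule gen[unfolded gen_def, rule_format], intro conjI ballI allI impI)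
    show "uminus ` M \<noteq> {}" using Mne by simp
    fix h s assume h: "h \<in> uminus ` M" and s: "0 < \<mu> $ s"
    then obtain g where g: "g \<in> M" "h = - g" by auto
    have "g - s \<in> M" using step[OF g(1) s] by (simp add: M_def)
    moreover have "h + s = - (g - s)" using g by simp
    ultimately show "h + s \<in> uminus ` M" by blast
  qed
  then have all: "\<rho> $ g = m" for g
  proof -
    assume "uminus ` M = UNIV"
    then have "- g \<in> uminus ` M" by simp
    then have "g \<in> M" by (metis (no_types, lifting) image_iff minus_minus)
    then show ?thesis by (simp add: M_def)
  qed
  have "1 = (\<Sum>g\<in>UNIV. \<rho> $ g)" using rho by (simp add: prob_meas_def)
  also have "\<dots> = real CARD('a) * m" by (simp add: all)
  finally have "m = 1 / real CARD('a)" by (simp add: field_simps)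
  then show ?thesis by (simp add: vec_eq_iff unif_def all)
qed

lemma subsub:
  fixes f :: "nat \<Rightarrow> 'a::metric_space"
  assumes H: "\<And>r::nat\<Rightarrow>nat. strict_mono r \<Longrightarrow> \<exists>r'::nat\<Rightarrow>nat. strict_mono r' \<and> (f \<circ> r \<circ> r') \<longlonglongrightarrow> l"
  shows "f \<longlonglongrightarrow> l"
proof (rule ccontr)
  assume "\<not> f \<longlonglongrightarrow> l"
  then obtain e where e: "e > 0" "\<forall>N. \<exists>n\<ge>N. \<not> dist (f n) l < e"
    unfolding LIMSEQ_def by blast
  then have "infinite {n. e \<le> dist (f n) l}"
    unfolding infinite_nat_iff_unbounded_le by (auto simp: not_less)
  then obtain r :: "nat \<Rightarrow> nat" where r: "strict_mono r" "\<And>n. r n \<in> {n. e \<le> dist (f n) l}"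
    using infinite_enumerate by blast
  obtain r' where r': "(f \<circ> r \<circ> r') \<longlonglongrightarrow> l" using H[OF r(1)] by blast
  then obtain N where "\<forall>n\<ge>N. dist ((f \<circ> r \<circ> r') n) l < e" using e(1) unfolding LIMSEQ_def by blast
  then have "dist (f (r (r' N))) l < e" by simp
  moreover have "e \<le> dist (f (r (r' N))) l" using r(2)[of "r' N"] by simp
  ultimately show False by simp
qed

lemma closed_prob: "closed (prob_meas :: (real ^ ('g::{ab_group_add,finite})) set)"
  unfolding prob_meas_def
  by (intro closed_Collect_conj closed_Collect_all closed_Collect_le closed_Collect_eq continuous_intros)

lemma compact_prob: "compact (prob_meas :: (real ^ ('g::{ab_group_add,finite})) set)"
proof -
  have "bounded (prob_meas :: (real ^ ('g::{ab_group_add,finite})) set)"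
    unfolding bounded_iff using prob_norm by blast
  then show ?thesis using closed_prob compact_eq_bounded_closed by blast
qed

lemma conv_lim:
  assumes mu: "\<mu> \<in> prob_meas" and gen: "gen \<mu>"
    and t: "\<forall>k. 0 \<le> t k \<and> t k < 1" "t \<longlonglongrightarrow> 1"
  shows "(\<lambda>k. Qmap (t k) \<mu>) \<longlonglongrightarrow> unif"
proof (rule subsub)
  define \<rho> where "\<rho> k = Qmap (t k) \<mu>" for k
  fix r :: "nat \<Rightarrow> nat" assume r: "strict_mono r"
  have inP: "\<forall>n. ((\<lambda>k. Qmap (t k) \<mu>) \<circ> r) n \<in> prob_meas"
    using Qmap_prob[OF mu] t(1) by simp
  obtain l r' where l: "l \<in> prob_meas" "strict_mono r'" "((\<lambda>k. Qmap (t k) \<mu>) \<circ> r \<circ> r') \<longlonglongrightarrow> l"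
    using seq_compactE[OF compact_imp_seq_compact[OF compact_prob] inP]
    by (metis comp_assoc)
  define s where "s = r \<circ> r'"
  have sm: "strict_mono s" unfolding s_def using r l(2) by (rule strict_mono_o)
  have ts: "(\<lambda>n. t (s n)) \<longlonglongrightarrow> 1"
    using LIMSEQ_subseq_LIMSEQ[OF t(2) sm] by (simp add: comp_def)
  have rs: "(\<lambda>n. \<rho> (s n)) \<longlonglongrightarrow> l" using l(3) by (simp add: s_def \<rho>_def comp_def)
  have "conv \<mu> l $ g = l $ g" for g
  proof -
    have "(\<lambda>n. t (s n) * conv \<mu> (\<rho> (s n)) $ g) \<longlonglongrightarrow> 1 * conv \<mu> l $ g"
      unfolding conv_nth by (intro tendsto_intros ts rs)
    moreover have "(\<lambda>n. t (s n) * conv \<mu> (\<rho> (s n)) $ g) = (\<lambda>n. \<rho> (s n) $ g - (1 - t (s n)) * \<mu> $ g)"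
      using Qmap_fix[OF mu] t(1) by (simp add: \<rho>_def)
    moreover have "(\<lambda>n. \<rho> (s n) $ g - (1 - t (s n)) * \<mu> $ g) \<longlonglongrightarrow> l $ g - (1 - 1) * \<mu> $ g"
      by (intro tendsto_intros ts rs)
    ultimately show ?thesis using LIMSEQ_unique by fastforce
  qed
  then have "l = unif" using maxp[OF mu gen l(1)] by (simp add: vec_eq_iff)
  then show "\<exists>r'. strict_mono r' \<and> ((\<lambda>k. Qmap (t k) \<mu>) \<circ> r \<circ> r') \<longlonglongrightarrow> unif"
    using l by blast
qed

lemma omega_gen:
  assumes mu: "\<mu> \<in> prob_meas" and gen: "gen \<mu>"
  shows "omega_limit \<mu> = {unif}"
proof
  show "omega_limit \<mu> \<subseteq> {unif}"
  proof
    fix \<nu> assume "\<nu> \<in> omega_limit \<mu>"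
    then obtain t where t: "\<forall>k. 0 \<le> t k \<and> t k < 1" "t \<longlonglongrightarrow> 1" "(\<lambda>k. Qmap (t k) \<mu>) \<longlonglongrightarrow> \<nu>"
      unfolding omega_limit_def by blast
    have "(\<lambda>k. Qmap (t k) \<mu>) \<longlonglongrightarrow> unif" using conv_lim[OF mu gen t(1,2)] .
    then show "\<nu> \<in> {unif}" using t(3) LIMSEQ_unique by auto
  qed
  show "{unif} \<subseteq> omega_limit \<mu>"
  proof -
    define t where "t k = 1 + - inverse (real (Suc k))" for k :: nat
    have t1: "\<forall>k. 0 \<le> t k \<and> t k < 1" by (simp add: t_def inverse_le_1_iff)
    have t2: "t \<longlonglongrightarrow> 1" unfolding t_def by (rule LIMSEQ_inverse_real_of_nat_add_minus)
    show ?thesis using t1 t2 conv_lim[OF mu gen t1 t2] unfolding omega_limit_def by blast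
  qed
qed

lemma not_gen:
  assumes mu: "\<mu> \<in> prob_meas" and ng: "\<not> gen \<mu>"
  shows "unif \<notin> omega_limit \<mu>"
proof
  obtain M where M: "M \<noteq> {}" "\<forall>g\<in>M. \<forall>s. 0 < \<mu> $ s \<longrightarrow> g + s \<in> M" "M \<noteq> UNIV"
    using ng unfolding gen_def by blast
  obtain g0 where g0: "g0 \<in> M" using M(1) by blast
  obtain h0 where h0: "h0 \<notin> M" using M(3) by blast
  have supp: "conv_pow \<mu> (Suc n) $ g \<noteq> 0 \<longrightarrow> g0 + g \<in> M" for n g
  proof (induction n arbitrary: g)
    case 0
    show ?case using M(2) g0 prob_nth[OF mu, of g] by (auto simp: conv_delta0)
  next
    case (Suc n)
    show ?case
    proof
      assume "conv_pow \<mu> (Suc (Suc n)) $ g \<noteq> 0"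
      then have ne: "(\<Sum>x\<in>UNIV. \<mu> $ x * conv_pow \<mu> (Suc n) $ (g - x)) \<noteq> 0"
        unfolding conv_pow.simps(2)[of \<mu> "Suc n"] conv_nth .
      have "\<exists>x. \<mu> $ x * conv_pow \<mu> (Suc n) $ (g - x) \<noteq> 0"
      proof (rule ccontr)
        assume "\<not> (\<exists>x. \<mu> $ x * conv_pow \<mu> (Suc n) $ (g - x) \<noteq> 0)"
        then have "(\<Sum>x\<in>UNIV. \<mu> $ x * conv_pow \<mu> (Suc n) $ (g - x)) = 0"
          by (intro sum.neutral) blast
        then show False using ne by contradiction
      qed
      then obtain x where x: "\<mu> $ x * conv_pow \<mu> (Suc n) $ (g - x) \<noteq> 0"
        by blast
      then have "0 < \<mu> $ x" using prob_nth[OF mu, of x] by auto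
      moreover have "g0 + (g - x) \<in> M" using Suc x by auto
      ultimately have "g0 + (g - x) + x \<in> M" using M(2) by blast
      then show "g0 + g \<in> M" by (simp add: algebra_simps)
    qed
  qed
  define h where "h = h0 - g0"
  have zero: "Qmap t \<mu> $ h = 0" if "0 \<le> t" "t < 1" for t
  proof -
    have "conv_pow \<mu> (Suc k) $ h = 0" for k using supp[of k h] h0 by (auto simp: h_def)
    then show ?thesis using Qmap_nth[OF mu that, of h] by simp
  qed
  assume "unif \<in> omega_limit \<mu>"
  then obtain t where t: "\<forall>k. 0 \<le> t k \<and> t k < 1" "(\<lambda>k. Qmap (t k) \<mu>) \<longlonglongrightarrow> unif"
    unfolding omega_limit_def by blast
  have "(\<lambda>k. Qmap (t k) \<mu> $ h) \<longlonglongrightarrow> unif $ h" using t(2) by (intro tendsto_intros)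
  moreover have "(\<lambda>k. Qmap (t k) \<mu> $ h) = (\<lambda>k. 0)" using zero t(1) by auto
  ultimately have "unif $ h = (0::real)" using LIMSEQ_unique tendsto_const by metis
  then show False using unif_pos[of h] by simp
qed

lemma basin_iff: "\<mu> \<in> basin unif \<longleftrightarrow> \<mu> \<in> prob_meas \<and> gen \<mu>"
  using omega_gen not_gen unfolding basin_def by blast

lemma gen_mono: "gen \<mu> \<Longrightarrow> (\<forall>s. 0 < \<mu> $ s \<longrightarrow> 0 < \<nu> $ s) \<Longrightarrow> gen \<nu>"
  unfolding gen_def by blast

lemma gen_full: "(\<forall>s. 0 < \<mu> $ s) \<Longrightarrow> gen \<mu>"
  unfolding gen_def
proof (intro allI impI)
  fix M :: "'a set" assume a: "\<forall>s. 0 < \<mu> $ s" "M \<noteq> {} \<and> (\<forall>g\<in>M. \<forall>s. 0 < \<mu> $ s \<longrightarrow> g + s \<in> M)"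
  then obtain g where g: "g \<in> M" by blast
  have "g + (h - g) \<in> M" for h using a g by blast
  then show "M = UNIV" by auto
qed

theorem mainTheorem19:
  shows "\<exists>\<nu> :: real ^ 'g::{ab_group_add,finite}. \<nu> \<in> prob_meas
     \<and> openin (top_of_set prob_meas) (basin \<nu>)
     \<and> prob_meas \<subseteq> closure (basin \<nu>)"
proof (intro exI conjI)
  show "unif \<in> prob_meas" by (rule unif_prob)
  define V where "V \<mu> = (\<Inter>s\<in>{s. 0 < \<mu> $ s}. {\<nu> :: real ^ ('g::{ab_group_add,finite}). 0 < \<nu> $ s})" for \<mu> :: "real ^ ('g::{ab_group_add,finite})"
  have Vo: "open (V \<mu>)" for \<mu>
    unfolding V_def by (rule open_INT) (simp_all add: open_halfspace_component_gt_cart)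
  show "openin (top_of_set prob_meas) (basin (unif :: real ^ ('g::{ab_group_add,finite})))"
    unfolding openin_open
  proof (intro exI conjI)
    show "open (\<Union>\<mu>\<in>basin unif. V \<mu>)" using Vo by blast
    show "basin unif = prob_meas \<inter> (\<Union>\<mu>\<in>basin unif. V \<mu>)"
    proof
      show "basin unif \<subseteq> prob_meas \<inter> (\<Union>\<mu>\<in>basin unif. V \<mu>)"
        using basin_iff by (auto simp: V_def)
      show "prob_meas \<inter> (\<Union>\<mu>\<in>basin unif. V \<mu>) \<subseteq> basin unif"
      proof
        fix \<nu> assume "\<nu> \<in> prob_meas \<inter> (\<Union>\<mu>\<in>basin unif. V \<mu>)"
        then obtain \<mu> where "\<nu> \<in> prob_meas" "\<mu> \<in> basin unif" "\<nu> \<in> V \<mu>" by blast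
        then have "\<nu> \<in> prob_meas" "gen \<mu>" "\<forall>s. 0 < \<mu> $ s \<longrightarrow> 0 < \<nu> $ s"
          using basin_iff by (auto simp: V_def)
        then show "\<nu> \<in> basin unif" using basin_iff gen_mono by blast
      qed
    qed
  qed
  show "prob_meas \<subseteq> closure (basin (unif :: real ^ ('g::{ab_group_add,finite})))"
  proof
    fix \<mu> :: "real ^ ('g::{ab_group_add,finite})" assume mu: "\<mu> \<in> prob_meas"
    define f where "f n = \<mu> + (inverse (real (Suc n))) *\<^sub>R (unif - \<mu>)" for n :: nat
    have "f n \<in> basin unif" for n
    proof -
      define e where "e = inverse (real (Suc n))"
      have e: "0 < e" "e \<le> 1" by (auto simp: e_def inverse_le_1_iff)
      have fn: "f n $ g = (1 - e) * \<mu> $ g + e * unif $ g" for g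
        by (simp add: f_def e_def algebra_simps)
      have pos: "0 < f n $ g" for g
        using fn[of g] e unif_pos[of g] prob_nth[OF mu, of g]
        by (metis add_nonneg_pos diff_ge_0_iff_ge mult_nonneg_nonneg mult_pos_pos)
      have "(\<Sum>g\<in>UNIV. f n $ g) = (1 - e) * (\<Sum>g\<in>UNIV. \<mu> $ g) + e * (\<Sum>g\<in>UNIV. (unif :: real ^ ('g::{ab_group_add,finite})) $ g)"
        by (simp add: fn sum.distrib sum_distrib_left)
      also have "\<dots> = 1" using mu unif_prob[where 'a='g] by (simp add: prob_meas_def)
      finally have "f n \<in> prob_meas" using pos by (simp add: prob_meas_def less_imp_le)
      then show ?thesis using basin_iff gen_full pos by blast
    qed
    moreover have "f \<longlonglongrightarrow> \<mu> + 0 *\<^sub>R (unif - \<mu>)"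
      unfolding f_def by (intro tendsto_intros LIMSEQ_inverse_real_of_nat)
    ultimately show "\<mu> \<in> closure (basin unif)"
      unfolding closure_sequential by auto
  qed
qed

end
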